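(* Let $T$ be an $\mathcal O$-operator on a Lie algebra $\mathfrak g$ with respect to a representation $(V;\rho)$. Then for any Nijenhuis element $x\in\mathrm{Nij}(T)$, setting $\mathfrak T:=d_{\bar\rho}x$, i.e. $\mathfrak T(u)=[Tu,x]+T\rho(x)(u)$, the family $T_t:=T+t\mathfrak T$ is a trivial one-parameter infinitesimal deformation of $T$.
   Context: An $\mathcal O$-operator: linear $T:V\to\mathfrak g$ with $[Tu,Tv]=T(\rho(Tu)(v)-\rho(Tv)(u))$. An element $x\in\mathfrak g$ is a Nijenhuis element associated to $T$ (written $x\in\mathrm{Nij}(T)$) if $[[x,y],[x,z]]=0$ for all $y,z\in\mathfrak g$, $\rho([x,y])\rho(x)=0$ for all $y\in\mathfrak g$, and $[x,[Tu,x]+T\rho(x)(u)]=0$ for all $u\in V$. A one-parameter infinitesimal deformation of $T$ is $T+t\mathfrak T$ ($\mathfrak T:V\to\mathfrak g$ linear) which is an $\mathcal O$-operator for every scalar $t$; it is trivial if there is $x\in\mathfrak g$ such that $(\mathrm{Id}_{\mathfrak g}+t\,\mathrm{ad}_x,\mathrm{Id}_V+t\rho(x))$ is a homomorphism from $T+t\mathfrak T$ to $T$, where a homomorphism from an $\mathcal O$-operator $T'$ to $T$ is a pair of a Lie algebra homomorphism $\phi_{\mathfrak g}:\mathfrak g\to\mathfrak g$ and a linear $\phi_V:V\to V$ with $T\circ\phi_V=\phi_{\mathfrak g}\circ T'$ and $\phi_V\rho(y)(u)=\rho(\phi_{\mathfrak g}(y))(\phi_V(u))$ for all $y\in\mathfrak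 g,u\in V$. *)

theory Defs
  imports Main "HOL.Vector_Spaces"
begin

definition lie_algebra ::
  "('k::field \<Rightarrow> 'g::ab_group_add \<Rightarrow> 'g) \<Rightarrow> ('g \<Rightarrow> 'g \<Rightarrow> 'g) \<Rightarrow> bool" where
  "lie_algebra sg br \<longleftrightarrow>
     vector_space sg \<and>
     (\<forall>y. Vector_Spaces.linear sg sg (\<lambda>z. br y z)) \<and>
     (\<forall>z. Vector_Spaces.linear sg sg (\<lambda>y. br y z)) \<and>
     (\<forall>x. br x x = 0) \<and>
     (\<forall>x y z. br x (br y z) + br y (br z x) + br z (br x y) = 0)"

definition lie_rep ::
  "('k::field \<Rightarrow> 'g::ab_group_add \<Rightarrow> 'g) \<Rightarrow> ('g \<Rightarrow> 'g \<Rightarrow> 'g) \<Rightarrow>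
   ('k \<Rightarrow> 'v::ab_group_add \<Rightarrow> 'v) \<Rightarrow> ('g \<Rightarrow> 'v \<Rightarrow> 'v) \<Rightarrow> bool" where
  "lie_rep sg br sv rho \<longleftrightarrow>
     lie_algebra sg br \<and> vector_space sv \<and>
     (\<forall>x y u. rho (x + y) u = rho x u + rho y u) \<and>
     (\<forall>c x u. rho (sg c x) u = sv c (rho x u)) \<and>
     (\<forall>x. Vector_Spaces.linear sv sv (rho x)) \<and>
     (\<forall>x y u. rho (br x y) u = rho x (rho y u) - rho y (rho x u))"

definition O_operator ::
  "('k::field \<Rightarrow> 'g::ab_group_add \<Rightarrow> 'g) \<Rightarrow> ('g \<Rightarrow> 'g \<Rightarrow> 'g) \<Rightarrow>
   ('k \<Rightarrow> 'v::ab_group_add \<Rightarrow> 'v) \<Rightarrow> ('g \<Rightarrow> 'v \<Rightarrow> 'v) \<Rightarrow> ('v \<Rightarrow> 'g) \<Rightarrow> bool" where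
  "O_operator sg br sv rho T \<longleftrightarrow>
     Vector_Spaces.linear sv sg T \<and>
     (\<forall>u v. br (T u) (T v) = T (rho (T u) v - rho (T v) u))"

definition Nij ::
  "('g::ab_group_add \<Rightarrow> 'g \<Rightarrow> 'g) \<Rightarrow> ('g \<Rightarrow> 'v::ab_group_add \<Rightarrow> 'v) \<Rightarrow> ('v \<Rightarrow> 'g) \<Rightarrow> 'g set" where
  "Nij br rho T = {x.
     (\<forall>y z. br (br x y) (br x z) = 0) \<and>
     (\<forall>y u. rho (br x y) (rho x u) = 0) \<and>
     (\<forall>u. br x (br (T u) x + T (rho x u)) = 0)}"

definition lie_hom ::
  "('k::field \<Rightarrow> 'g::ab_group_add \<Rightarrow> 'g) \<Rightarrow> ('g \<Rightarrow> 'g \<Rightarrow> 'g) \<Rightarrow> ('g \<Rightarrow> 'g) \<Rightarrow> bool" where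
  "lie_hom sg br phi \<longleftrightarrow>
     Vector_Spaces.linear sg sg phi \<and> (\<forall>x y. phi (br x y) = br (phi x) (phi y))"

definition O_hom ::
  "('k::field \<Rightarrow> 'g::ab_group_add \<Rightarrow> 'g) \<Rightarrow> ('g \<Rightarrow> 'g \<Rightarrow> 'g) \<Rightarrow>
   ('k \<Rightarrow> 'v::ab_group_add \<Rightarrow> 'v) \<Rightarrow> ('g \<Rightarrow> 'v \<Rightarrow> 'v) \<Rightarrow>
   ('v \<Rightarrow> 'g) \<Rightarrow> ('v \<Rightarrow> 'g) \<Rightarrow> ('g \<Rightarrow> 'g) \<Rightarrow> ('v \<Rightarrow> 'v) \<Rightarrow> bool" where
  "O_hom sg br sv rho T' T phig phiV \<longleftrightarrow>
     lie_hom sg br phig \<and> Vector_Spaces.linear sv sv phiV \<and>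
     (\<forall>u. T (phiV u) = phig (T' u)) \<and>
     (\<forall>y u. phiV (rho y u) = rho (phig y) (phiV u))"

definition inf_deformation ::
  "('k::field \<Rightarrow> 'g::ab_group_add \<Rightarrow> 'g) \<Rightarrow> ('g \<Rightarrow> 'g \<Rightarrow> 'g) \<Rightarrow>
   ('k \<Rightarrow> 'v::ab_group_add \<Rightarrow> 'v) \<Rightarrow> ('g \<Rightarrow> 'v \<Rightarrow> 'v) \<Rightarrow> ('v \<Rightarrow> 'g) \<Rightarrow> ('v \<Rightarrow> 'g) \<Rightarrow> bool" where
  "inf_deformation sg br sv rho T Tf \<longleftrightarrow>
     Vector_Spaces.linear sv sg Tf \<and>
     (\<forall>t::'k. O_operator sg br sv rho (\<lambda>u. T u + sg t (Tf u)))"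

definition trivial_inf_deformation ::
  "('k::field \<Rightarrow> 'g::ab_group_add \<Rightarrow> 'g) \<Rightarrow> ('g \<Rightarrow> 'g \<Rightarrow> 'g) \<Rightarrow>
   ('k \<Rightarrow> 'v::ab_group_add \<Rightarrow> 'v) \<Rightarrow> ('g \<Rightarrow> 'v \<Rightarrow> 'v) \<Rightarrow> ('v \<Rightarrow> 'g) \<Rightarrow> ('v \<Rightarrow> 'g) \<Rightarrow> bool" where
  "trivial_inf_deformation sg br sv rho T Tf \<longleftrightarrow>
     inf_deformation sg br sv rho T Tf \<and>
     (\<exists>x. \<forall>t::'k. O_hom sg br sv rho (\<lambda>u. T u + sg t (Tf u)) T
                  (\<lambda>y. y + sg t (br x y)) (\<lambda>u. u + sv t (rho x u)))"

end

theory Submission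
  imports Defs
begin

lemma addh_zero: fixes f :: "'a::ab_group_add \<Rightarrow> 'b::ab_group_add"
  assumes "\<And>a b. f (a + b) = f a + f b" shows "f 0 = 0"
  using assms[of 0 0] by simp

lemma addh_diff: fixes f :: "'a::ab_group_add \<Rightarrow> 'b::ab_group_add"
  assumes "\<And>a b. f (a + b) = f a + f b" shows "f (a - b) = f a - f b"
  using assms[of "a - b" b] by (simp add: algebra_simps)

theorem theorem4p9:
  fixes sg :: "'k::field \<Rightarrow> 'g::ab_group_add \<Rightarrow> 'g"
    and br :: "'g \<Rightarrow> 'g \<Rightarrow> 'g"
    and sv :: "'k \<Rightarrow> 'v::ab_group_add \<Rightarrow> 'v"
    and rho :: "'g \<Rightarrow> 'v \<Rightarrow> 'v"
    and T :: "'v \<Rightarrow> 'g"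
    and x :: 'g
  assumes "lie_rep sg br sv rho"
    and "O_operator sg br sv rho T"
    and "x \<in> Nij br rho T"
  shows "trivial_inf_deformation sg br sv rho T (\<lambda>u. br (T u) x + T (rho x u))"
proof -
  from assms(1) have LA: "lie_algebra sg br" and VV: "vector_space sv"
    and rA: "\<And>a b u. rho (a + b) u = rho a u + rho b u"
    and rS: "\<And>c a u. rho (sg c a) u = sv c (rho a u)"
    and rL: "\<And>a. Vector_Spaces.linear sv sv (rho a)"
    and rB: "\<And>a b u. rho (br a b) u = rho a (rho b u) - rho b (rho a u)"
    unfolding lie_rep_def by auto
  from LA have VG: "vector_space sg"
    and bL2: "\<And>a. Vector_Spaces.linear sg sg (\<lambda>z. br a z)"
    and bL1: "\<And>a. Vector_Spaces.linear sg sg (\<lambda>z. br z a)"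
    and alt: "\<And>a. br a a = 0"
    and jac: "\<And>a b c. br a (br b c) + br b (br c a) + br c (br a b) = 0"
    unfolding lie_algebra_def by auto
  interpret G: vector_space sg by (rule VG)
  interpret V: vector_space sv by (rule VV)
  from assms(2) have TL: "Vector_Spaces.linear sv sg T"
    and O: "\<And>u v. br (T u) (T v) = T (rho (T u) v - rho (T v) u)"
    unfolding O_operator_def by auto
  from assms(3) have N1: "\<And>a b. br (br x a) (br x b) = 0"
    and N2: "\<And>a u. rho (br x a) (rho x u) = 0"
    and N3: "\<And>u. br x (br (T u) x + T (rho x u)) = 0"
    unfolding Nij_def by auto
  have b1A: "\<And>a b c. br (a + b) c = br a c + br b c" using bL1 unfolding linear_iff by auto
  have b2A: "\<And>a b c. br c (a + b) = br c a + br c b" using bL2 unfolding linear_iff by auto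
  have b1S: "\<And>k a c. br (sg k a) c = sg k (br a c)" using bL1 unfolding linear_iff by auto
  have b2S: "\<And>k a c. br c (sg k a) = sg k (br c a)" using bL2 unfolding linear_iff by auto
  have b1D: "\<And>a b c. br (a - b) c = br a c - br b c" by (rule addh_diff, rule b1A)
  have b2D: "\<And>a b c. br c (a - b) = br c a - br c b" by (rule addh_diff, rule b2A)
  have b10: "\<And>c. br 0 c = 0" by (rule addh_zero, rule b1A)
  have b20: "\<And>c. br c 0 = 0" by (rule addh_zero, rule b2A)
  have TA: "\<And>a b. T (a + b) = T a + T b" using TL unfolding linear_iff by auto
  have TS: "\<And>k a. T (sv k a) = sg k (T a)" using TL unfolding linear_iff by auto
  have TD: "\<And>a b. T (a - b) = T a - T b" by (rule addh_diff, rule TA)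
  have rvA: "\<And>a u w. rho a (u + w) = rho a u + rho a w" using rL unfolding linear_iff by auto
  have rvS: "\<And>a k u. rho a (sv k u) = sv k (rho a u)" using rL unfolding linear_iff by auto
  have rvD: "\<And>a u w. rho a (u - w) = rho a u - rho a w" by (rule addh_diff, rule rvA)
  have rD: "\<And>a b u. rho (a - b) u = rho a u - rho b u"
    by (rule addh_diff[where f="\<lambda>a. rho a u" for u], rule rA)
  have r0: "\<And>u. rho 0 u = 0" by (rule addh_zero[where f="\<lambda>a. rho a u" for u], rule rA)
  have anti: "\<And>a b. br a b = - br b a"
  proof -
    fix a b
    have "br (a+b) (a+b) = 0" by (rule alt)
    hence "br a a + br a b + br b a + br b b = 0" by (simp add: b1A b2A algebra_simps)
    thus "br a b = - br b a" by (simp add: alt eq_neg_iff_add_eq_0)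
  qed
  have der: "\<And>z a b. br z (br a b) = br (br z a) b + br a (br z b)"
  proof -
    fix z a b
    have "br z (br a b) + br a (br b z) + br b (br z a) = 0" by (rule jac)
    moreover have "br a (br b z) = - br a (br z b)" using anti[of b z]
      by (metis add_diff_cancel_left' b2D diff_0 b20)
    moreover have "br b (br z a) = - br (br z a) b" by (rule anti)
    ultimately show "br z (br a b) = br (br z a) b + br a (br z b)"
      by (simp add: algebra_simps eq_neg_iff_add_eq_0)
  qed
  define D where "D = (\<lambda>u. br (T u) x + T (rho x u))"
  have DL: "Vector_Spaces.linear sv sg D"
    unfolding linear_iff D_def using VG VV
    by (auto simp: TA TS b1A b1S rvA rvS G.scale_right_distrib algebra_simps)
  have DA: "\<And>a b. D (a + b) = D a + D b" using DL unfolding linear_iff by auto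
  have DS: "\<And>k a. D (sv k a) = sg k (D a)" using DL unfolding linear_iff by auto
  have DD: "\<And>a b. D (a - b) = D a - D b" by (rule addh_diff, rule DA)
  have P: "\<And>u. T (rho x u) = D u + br x (T u)" unfolding D_def using anti by (metis add.commute add_minus_cancel)
  have AD: "\<And>u. br x (D u) = 0" unfolding D_def by (rule N3)
  have rx: "\<And>y u. rho x (rho y u) = rho y (rho x u) + rho (br x y) u" by (simp add: rB)

  have PD: "\<And>u. D u = T (rho x u) - br x (T u)" using P by (simp add: algebra_simps)
  have e1: "\<And>u v. rho (T (rho x u)) v = rho (D u) v + rho x (rho (T u) v) - rho (T u) (rho x v)"
    using P rA rB by simp
  have V1: "\<And>u v. rho (T u) (rho x v) - rho (T (rho x v)) u + rho (T (rho x u)) v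
      - rho (T v) (rho x u) - rho x (rho (T u) v - rho (T v) u) = rho (D u) v - rho (D v) u"
    by (simp add: e1 rvD algebra_simps)
  have w1: "\<And>u v. br (T u) (D v) + br (D u) (T v)
      = T (rho (D u) v - rho (D v) u) + D (rho (T u) v - rho (T v) u)"
  proof -
    fix u v
    define a where "a = rho (T u) v - rho (T v) u"
    have "br (T u) (D v) + br (D u) (T v)
        = br (T u) (T (rho x v)) + br (T (rho x u)) (T v) - br x (br (T u) (T v))"
      by (simp add: PD b1D b2D der[of x "T u" "T v"] algebra_simps)
    also have "\<dots> = T (rho (T u) (rho x v) - rho (T (rho x v)) u + rho (T (rho x u)) v
      - rho (T v) (rho x u) - rho x a) + D a"
      using P[of a] by (simp add: O a_def[symmetric] TA TD algebra_simps)
    also have "\<dots> = T (rho (D u) v - rho (D v) u) + D a" using V1 a_def by simp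
    finally show "br (T u) (D v) + br (D u) (T v)
      = T (rho (D u) v - rho (D v) u) + D (rho (T u) v - rho (T v) u)" by (simp add: a_def)
  qed
  have V2: "\<And>u v. rho (T (rho x u)) (rho x v) - rho (T (rho x v)) (rho x u)
      - rho x (rho (D u) v - rho (D v) u) = 0"
    by (simp add: P rA rvD rx AD r0 N2)
  have w2: "\<And>u v. br (D u) (D v) = D (rho (D u) v - rho (D v) u)"
  proof -
    fix u v
    define a where "a = rho (T u) v - rho (T v) u"
    define c where "c = rho (T u) (rho x v) - rho (T (rho x v)) u + rho (T (rho x u)) v
      - rho (T v) (rho x u)"
    have xP: "\<And>w. br x (T (rho x w)) = br x (br x (T w))" using P AD by (simp add: b2A)
    have s1: "br (D u) (D v) = br (T (rho x u)) (T (rho x v)) - br (T (rho x u)) (br x (T v))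
       - br (br x (T u)) (T (rho x v))"
      by (simp add: PD b1D b2D N1 algebra_simps)
    have s2: "br (T (rho x u)) (br x (T v)) = br x (br (T (rho x u)) (T v)) - br (br x (br x (T u))) (T v)"
      using der[of x "T (rho x u)" "T v"] xP by (simp add: algebra_simps)
    have s3: "br (br x (T u)) (T (rho x v)) = br x (br (T u) (T (rho x v))) - br (T u) (br x (br x (T v)))"
      using der[of x "T u" "T (rho x v)"] xP by (simp add: algebra_simps)
    have s4: "br (br x (br x (T u))) (T v) + br (T u) (br x (br x (T v))) = br x (br x (br (T u) (T v)))"
      using der[of x "br x (T u)" "T v"] der[of x "T u" "br x (T v)"] der[of x "T u" "T v"] N1
      by (simp add: b2A)
    have s5: "br (T (rho x u)) (T v) + br (T u) (T (rho x v)) = T c"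
      by (simp add: O c_def TA TD algebra_simps)
    have s6: "br x (T c) = T (rho x c) - D c" using P by (simp add: algebra_simps)
    have s7: "br x (br x (br (T u) (T v))) = T (rho x (rho x a)) - D (rho x a)"
    proof -
      have q1: "br (T u) (T v) = T a" by (simp add: O a_def)
      have q2: "br x (T a) = T (rho x a) - D a" using P[of a] by (simp add: algebra_simps)
      have q3: "br x (T (rho x a)) = T (rho x (rho x a)) - D (rho x a)"
        using P[of "rho x a"] by (simp add: algebra_simps)
      show ?thesis by (simp only: q1 q2 b2D AD q3 diff_zero)
    qed
    have "br (D u) (D v) = br (T (rho x u)) (T (rho x v)) - br x (T c) + br x (br x (br (T u) (T v)))"
      using s1 s2 s3 s4 s5[symmetric] by (simp add: b2A algebra_simps)
    also have "\<dots> = T (rho (T (rho x u)) (rho x v) - rho (T (rho x v)) (rho x u)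
       - rho x (c - rho x a)) + D (c - rho x a)"
      by (simp only: s6 s7) (simp add: O TA TD DA DD rvD algebra_simps)
    also have "c - rho x a = rho (D u) v - rho (D v) u" using V1 by (simp add: c_def a_def)
    finally show "br (D u) (D v) = D (rho (D u) v - rho (D v) u)"
      using V2 TL by (simp add: addh_zero[OF TA])
  qed
  have Ot: "\<And>t. O_operator sg br sv rho (\<lambda>u. T u + sg t (D u))"
  proof -
    fix t
    have lin: "Vector_Spaces.linear sv sg (\<lambda>u. T u + sg t (D u))"
      unfolding linear_iff using VG VV
      by (simp add: TA TS DA DS G.scale_right_distrib mult.commute algebra_simps)
    have "\<And>u v. br (T u + sg t (D u)) (T v + sg t (D v)) =
       T (rho (T u + sg t (D u)) v - rho (T v + sg t (D v)) u) +
         sg t (D (rho (T u + sg t (D u)) v - rho (T v + sg t (D v)) u))"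
    proof -
      fix u v
      define a where "a = rho (T u) v - rho (T v) u"
      define b where "b = rho (D u) v - rho (D v) u"
      have ab: "rho (T u + sg t (D u)) v - rho (T v + sg t (D v)) u = a + sv t b"
        by (simp add: a_def b_def rA rS V.scale_right_diff_distrib algebra_simps)
      have "br (T u + sg t (D u)) (T v + sg t (D v))
         = br (T u) (T v) + sg t (br (T u) (D v) + br (D u) (T v)) + sg t (sg t (br (D u) (D v)))"
        by (simp add: b1A b2A b1S b2S G.scale_right_distrib algebra_simps)
      also have "\<dots> = T a + sg t (T b + D a) + sg t (sg t (D b))"
        by (simp add: O w1 w2 a_def b_def)
      also have "\<dots> = T (a + sv t b) + sg t (D (a + sv t b))"
        by (simp add: TA TS DA DS G.scale_right_distrib algebra_simps)
      finally show "br (T u + sg t (D u)) (T v + sg t (D v)) =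
       T (rho (T u + sg t (D u)) v - rho (T v + sg t (D v)) u) +
         sg t (D (rho (T u + sg t (D u)) v - rho (T v + sg t (D v)) u))" by (simp add: ab)
    qed
    thus "O_operator sg br sv rho (\<lambda>u. T u + sg t (D u))"
      unfolding O_operator_def using lin by simp
  qed
  have Ht: "\<And>t. O_hom sg br sv rho (\<lambda>u. T u + sg t (D u)) T
                  (\<lambda>y. y + sg t (br x y)) (\<lambda>u. u + sv t (rho x u))"
  proof -
    fix t
    have h1: "lie_hom sg br (\<lambda>y. y + sg t (br x y))"
    proof -
      have l1: "\<And>a b. a + b + sg t (br x (a+b)) = (a + sg t (br x a)) + (b + sg t (br x b))"
        by (simp add: b2A G.scale_right_distrib algebra_simps)
      have l2: "\<And>c a. sg c a + sg t (br x (sg c a)) = sg c (a + sg t (br x a))"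
        by (simp add: b2S G.scale_right_distrib mult.commute)
      have l3: "\<And>y z. br y z + sg t (br x (br y z)) = br (y + sg t (br x y)) (z + sg t (br x z))"
      proof -
        fix y z
        have "br (y + sg t (br x y)) (z + sg t (br x z))
          = br y z + sg t (br y (br x z)) + (sg t (br (br x y) z) + sg t (sg t (br (br x y) (br x z))))"
          by (simp only: b1A b2A b1S b2S G.scale_right_distrib add_ac)
        also have "\<dots> = br y z + sg t (br x (br y z))"
          by (simp only: N1 G.scale_zero_right add_0_right add_0_left der[of x y z] G.scale_right_distrib add.commute add.left_commute)
        finally show "br y z + sg t (br x (br y z)) = br (y + sg t (br x y)) (z + sg t (br x z))" by simp
      qed
      show ?thesis unfolding lie_hom_def linear_iff using VG l1 l2 l3 by blast
    qed
    have h2: "Vector_Spaces.linear sv sv (\<lambda>u. u + sv t (rho x u))"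
      unfolding linear_iff using VV
      by (simp add: rvA rvS V.scale_right_distrib mult.commute algebra_simps)
    have h3: "\<And>u. T (u + sv t (rho x u)) = T u + sg t (D u) + sg t (br x (T u + sg t (D u)))"
      by (simp add: TA TS P b2A b2S AD G.scale_right_distrib algebra_simps)
    have h4: "\<And>y u. rho y u + sv t (rho x (rho y u)) =
       rho (y + sg t (br x y)) (u + sv t (rho x u))"
      by (simp add: rA rS rvA rvS rx N2 V.scale_right_distrib algebra_simps)
    show "O_hom sg br sv rho (\<lambda>u. T u + sg t (D u)) T
                  (\<lambda>y. y + sg t (br x y)) (\<lambda>u. u + sv t (rho x u))"
      unfolding O_hom_def using h1 h2 h3 h4 by (simp only: simp_thms)
  qed
  show ?thesis unfolding trivial_inf_deformation_def inf_deformation_def D_def[symmetric]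
    using DL Ot Ht by blast
qed

end
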